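(* Let $A$ be a band operator on $\ell^2(\mathbb{Z})$ satisfying $\mathcal{C}(A)=\mathcal{C}(A|_{\mathbb{N}})$. Then (a) $A$ is self-contained; (b) $\mathcal{C}(A^* )=\mathcal{C}(A^*|_{\mathbb{N}})$; (c) $\mathcal{C}(A)=\mathcal{C}(A|_{k..})$ for all $k\in\mathbb{Z}$. Moreover, (d) a band operator $B$ on $\ell^2(\mathbb{Z})$ is self-contained if and only if $\mathcal{C}(B)=\mathcal{C}(B|_{\mathbb{N}})\cup\mathcal{C}(B|_{-\mathbb{N}})$.
   Context: $\mathbb{N}=\{1,2,\dots\}$, $k..:=\{n\in\mathbb{Z}:n\ge k\}$, $a..b:=\{n\in\mathbb{Z}:a\le n\le b\}$. A band operator with band-width $w$ on $\ell^2(\mathbb{Z})$ is a bounded operator whose matrix satisfies $A_{ij}=0$ for $|i-j|>w$. For $\mathbb{J}\subseteq\mathbb{Z}$, $A|_{\mathbb{J}}:\ell^2(\mathbb{J})\to\ell^2(\mathbb{Z})$ is the restriction, with matrix $(A_{ij})_{i\in\mathbb{Z},j\in\mathbb{J}}$. For $N\in\mathbb{N}$, an $N$-column submatrix of an operator $B$ (with column index set $\mathbb{J}$) is a matrix $C=(C_{ij})_{i\in1-w..N+w,\,j\in1..N}$ with $C_{ij}=B_{k+i,k+j}$ for some $k$ with $k+1..k+N\subseteq\mathbb{J}$; $\mathcal{C}(B)$ is the set of all such matrices over all $N$. $A$ is self-contained if every $C\in\mathcal{C}(A)$ appears infinitely often in $A$, i.e. for infinitely many $k\in\mathbb{Z}$.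 *)

theory Defs
  imports Complex_Main
begin

text \<open>Bi-infinite matrices over the integers, identified with operators on l2(Z)
  (acting on finitely supported vectors, which are dense).\<close>
type_synonym zmat = "int \<Rightarrow> int \<Rightarrow> complex"

text \<open>Boundedness on l2(Z): the operator norm estimate on all finitely supported
  vectors (supported in a finite set F), measured on arbitrary finite row sets I.\<close>
definition bounded_op :: "zmat \<Rightarrow> bool" where
  "bounded_op A \<longleftrightarrow> (\<exists>C\<ge>0. \<forall>(x::int \<Rightarrow> complex) F I. finite F \<longrightarrow> finite I \<longrightarrow>
      (\<Sum>i\<in>I. (cmod (\<Sum>j\<in>F. A i j * x j))\<^sup>2) \<le> C * (\<Sum>j\<in>F. (cmod (x j))\<^sup>2))"

definition band_op :: "nat \<Rightarrow> zmat \<Rightarrow> bool" where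
  "band_op w A \<longleftrightarrow> bounded_op A \<and> (\<forall>i j. \<bar>i - j\<bar> > int w \<longrightarrow> A i j = 0)"

definition adj :: "zmat \<Rightarrow> zmat" where
  "adj A = (\<lambda>i j. cnj (A j i))"

text \<open>The N-column submatrix of A at offset k (band-width w): rows 1-w..N+w,
  columns 1..N; entries outside this index range are set to 0 so that equality of
  submatrices is equality of the matrices on their index range.\<close>
definition submat :: "nat \<Rightarrow> zmat \<Rightarrow> nat \<Rightarrow> int \<Rightarrow> nat \<times> (int \<Rightarrow> int \<Rightarrow> complex)" where
  "submat w A N k = (N, (\<lambda>i j. if i \<in> {1 - int w .. int N + int w} \<and> j \<in> {1 .. int N}
                                 then A (k + i) (k + j) else 0))"

definition Csub :: "nat \<Rightarrow> zmat \<Rightarrow> int set \<Rightarrow> (nat \<times> (int \<Rightarrow> int \<Rightarrow> complex)) set" where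
  "Csub w A J = {submat w A N k | N k. N \<ge> 1 \<and> {k + 1 .. k + int N} \<subseteq> J}"

definition self_contained :: "nat \<Rightarrow> zmat \<Rightarrow> bool" where
  "self_contained w A \<longleftrightarrow>
     (\<forall>C\<in>Csub w A UNIV. infinite {k::int. submat w A (fst C) k = C})"

end

theory Submission
  imports Defs
begin

lemma int_set_infinite:
  fixes S :: "int set"
  assumes "\<And>L::nat. \<exists>p\<in>S. \<bar>p\<bar> \<ge> int L"
  shows "infinite S"
proof
  assume f: "finite S"
  define M where "M = Max (insert 0 (abs ` S))"
  have b: "\<forall>p\<in>S. \<bar>p\<bar> \<le> M" unfolding M_def using f by (simp add: Max_ge_iff)
  have "M \<ge> 0" unfolding M_def using f by (simp add: Max_ge_iff)
  obtain p where p: "p \<in> S" "\<bar>p\<bar> \<ge> int (nat M + 1)" using assms by blast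
  have "int (nat M + 1) = M + 1" using \<open>M \<ge> 0\<close> by simp
  moreover have "\<bar>p\<bar> \<le> M" using b p(1) by blast
  ultimately show False using p(2) by linarith
qed

lemma sub_shift:
  assumes "submat w A M a = submat w A M b" "L + N \<le> M"
  shows "submat w A N (a + int L) = submat w A N (b + int L)"
proof -
  have "A (a + int L + i) (a + int L + j) = A (b + int L + i) (b + int L + j)"
    if "i \<in> {1 - int w .. int N + int w}" "j \<in> {1 .. int N}" for i j
  proof -
    have X: "(\<lambda>i j. if i \<in> {1 - int w .. int M + int w} \<and> j \<in> {1 .. int M}
                                 then A (a + i) (a + j) else 0) =
          (\<lambda>i j. if i \<in> {1 - int w .. int M + int w} \<and> j \<in> {1 .. int M}
                                 then A (b + i) (b + j) else 0)" using assms(1) unfolding submat_def by simp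
    have "(\<lambda>i j. if i \<in> {1 - int w .. int M + int w} \<and> j \<in> {1 .. int M}
                                 then A (a + i) (a + j) else 0) (i + int L) (j + int L) =
          (\<lambda>i j. if i \<in> {1 - int w .. int M + int w} \<and> j \<in> {1 .. int M}
                                 then A (b + i) (b + j) else 0) (i + int L) (j + int L)"
      using fun_cong[OF fun_cong[OF X]] by this
    moreover have "i + int L \<in> {1 - int w .. int M + int w} \<and> j + int L \<in> {1 .. int M}"
      using that assms(2) by auto
    ultimately have "A (a + (i + int L)) (a + (j + int L)) = A (b + (i + int L)) (b + (j + int L))" by simp
    then show ?thesis by (simp add: ac_simps)
  qed
  then show ?thesis unfolding submat_def by (auto intro!: ext)
qed

lemma adj_shift:
  assumes "submat w A (N + 2*w) a = submat w A (N + 2*w) b"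
  shows "submat w (adj A) N (a + int w) = submat w (adj A) N (b + int w)"
proof -
  have "A (a + int w + j) (a + int w + i) = A (b + int w + j) (b + int w + i)"
    if "i \<in> {1 - int w .. int N + int w}" "j \<in> {1 .. int N}" for i j
  proof -
    let ?M = "N + 2*w"
    have X: "(\<lambda>i j. if i \<in> {1 - int w .. int ?M + int w} \<and> j \<in> {1 .. int ?M}
                                 then A (a + i) (a + j) else 0) =
          (\<lambda>i j. if i \<in> {1 - int w .. int ?M + int w} \<and> j \<in> {1 .. int ?M}
                                 then A (b + i) (b + j) else 0)" using assms(1) unfolding submat_def by simp
    have "(\<lambda>i j. if i \<in> {1 - int w .. int ?M + int w} \<and> j \<in> {1 .. int ?M}
                                 then A (a + i) (a + j) else 0) (j + int w) (i + int w) =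
          (\<lambda>i j. if i \<in> {1 - int w .. int ?M + int w} \<and> j \<in> {1 .. int ?M}
                                 then A (b + i) (b + j) else 0) (j + int w) (i + int w)"
      using fun_cong[OF fun_cong[OF X]] by this
    moreover have "j + int w \<in> {1 - int w .. int ?M + int w} \<and> i + int w \<in> {1 .. int ?M}"
      using that by auto
    ultimately have "A (a + (j + int w)) (a + (i + int w)) = A (b + (j + int w)) (b + (i + int w))" by simp
    then show ?thesis by (simp add: ac_simps)
  qed
  then show ?thesis unfolding submat_def adj_def by (auto intro!: ext)
qed

lemma Csub_mono: "J \<subseteq> K \<Longrightarrow> Csub w A J \<subseteq> Csub w A K"
  unfolding Csub_def by blast

lemma occ:
  assumes "Csub w A UNIV = Csub w A {1..}" "N \<ge> 1"
  shows "\<exists>p \<ge> K. submat w A N p = submat w A N m"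
proof -
  define L where "L = nat \<bar>K\<bar>"
  have "submat w A (N + L) (m - int L) \<in> Csub w A UNIV"
    unfolding Csub_def using assms(2) by auto
  then have "submat w A (N + L) (m - int L) \<in> Csub w A {1..}" using assms(1) by simp
  then obtain N' k' where e: "submat w A (N + L) (m - int L) = submat w A N' k'"
    and "N' \<ge> 1" and s: "{k' + 1 .. k' + int N'} \<subseteq> {1..}"
    unfolding Csub_def by blast
  have "N' = N + L" using e unfolding submat_def by simp
  have "k' + 1 \<in> {k' + 1 .. k' + int N'}" using \<open>N' \<ge> 1\<close> by simp
  with s have "k' \<ge> 0" by auto
  have "submat w A N (m - int L + int L) = submat w A N (k' + int L)"
    by (rule sub_shift) (use e \<open>N' = N + L\<close> in auto)
  moreover have "k' + int L \<ge> K" using \<open>k' \<ge> 0\<close> unfolding L_def by linarith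
  ultimately show ?thesis by (intro exI[of _ "k' + int L"]) auto
qed

theorem lemma4p4:
  fixes A :: zmat and w :: nat
  assumes "band_op w A"
    and "Csub w A UNIV = Csub w A {1..}"
  shows "self_contained w A
    \<and> Csub w (adj A) UNIV = Csub w (adj A) {1..}
    \<and> (\<forall>k::int. Csub w A UNIV = Csub w A {k..})
    \<and> (\<forall>(B::zmat) (v::nat). band_op v B \<longrightarrow>
          (self_contained v B \<longleftrightarrow> Csub v B UNIV = Csub v B {1..} \<union> Csub v B {..-1}))"
proof (intro conjI allI impI)
  show "self_contained w A"
    unfolding self_contained_def
  proof
    fix C assume "C \<in> Csub w A UNIV"
    then obtain N m where C: "C = submat w A N m" "N \<ge> 1" unfolding Csub_def by blast
    show "infinite {k. submat w A (fst C) k = C}"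
    proof (rule int_set_infinite)
      fix L :: nat
      obtain p where "p \<ge> int L" "submat w A N p = submat w A N m"
        using occ[OF assms(2) C(2)] by blast
      then show "\<exists>p\<in>{k. submat w A (fst C) k = C}. \<bar>p\<bar> \<ge> int L"
        using C by (intro bexI[of _ p]) (auto simp: submat_def)
    qed
  qed
  show "Csub w (adj A) UNIV = Csub w (adj A) {1..}"
  proof
    show "Csub w (adj A) UNIV \<subseteq> Csub w (adj A) {1..}"
    proof
      fix C assume "C \<in> Csub w (adj A) UNIV"
      then obtain N m where C: "C = submat w (adj A) N m" "N \<ge> 1" unfolding Csub_def by blast
      obtain p where p: "p \<ge> 0" "submat w A (N + 2*w) p = submat w A (N + 2*w) (m - int w)"
        using occ[OF assms(2), of "N + 2*w" 0 "m - int w"] C(2) by auto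
      have "submat w (adj A) N (p + int w) = submat w (adj A) N (m - int w + int w)"
        by (rule adj_shift[OF p(2)])
      then have "C = submat w (adj A) N (p + int w)" using C by simp
      moreover have "{p + int w + 1 .. p + int w + int N} \<subseteq> {1..}" using p(1) by auto
      ultimately show "C \<in> Csub w (adj A) {1..}" unfolding Csub_def using C(2) by blast
    qed
  qed (rule Csub_mono, simp)
  fix k :: int
  show "Csub w A UNIV = Csub w A {k..}"
  proof
    show "Csub w A UNIV \<subseteq> Csub w A {k..}"
    proof
      fix C assume "C \<in> Csub w A UNIV"
      then obtain N m where C: "C = submat w A N m" "N \<ge> 1" unfolding Csub_def by blast
      obtain p where p: "p \<ge> k" "submat w A N p = submat w A N m"
        using occ[OF assms(2) C(2)] by blast
      have "{p + 1 .. p + int N} \<subseteq> {k..}" using p(1) by auto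
      then show "C \<in> Csub w A {k..}" unfolding Csub_def using C p by (intro CollectI exI[of _ N] exI[of _ p]) auto
    qed
  qed (rule Csub_mono, simp)
next
  fix B :: zmat and v :: nat
  show "self_contained v B \<longleftrightarrow> Csub v B UNIV = Csub v B {1..} \<union> Csub v B {..-1}"
  proof
    assume sc: "self_contained v B"
    show "Csub v B UNIV = Csub v B {1..} \<union> Csub v B {..-1}"
    proof
      show "Csub v B UNIV \<subseteq> Csub v B {1..} \<union> Csub v B {..-1}"
      proof
        fix C assume Cin: "C \<in> Csub v B UNIV"
        then obtain N m where C: "C = submat v B N m" "N \<ge> 1" unfolding Csub_def by blast
        have "infinite {k. submat v B (fst C) k = C}" using sc Cin unfolding self_contained_def by blast
        then have "infinite ({k. submat v B (fst C) k = C} - {- int N .. -1})" by simp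
        then obtain k where "k \<in> {k. submat v B (fst C) k = C} - {- int N .. -1}"
          by (metis ex_in_conv finite.emptyI)
        then have k: "submat v B N k = C" "k \<notin> {- int N .. -1}"
          using C by (auto simp: submat_def)
        show "C \<in> Csub v B {1..} \<union> Csub v B {..-1}"
        proof (cases "k \<ge> 0")
          case True
          then have "{k + 1 .. k + int N} \<subseteq> {1..}" by auto
          then show ?thesis unfolding Csub_def using k C by auto
        next
          case False
          then have "{k + 1 .. k + int N} \<subseteq> {..-1}" using k(2) by auto
          then show ?thesis unfolding Csub_def using k C by auto
        qed
      qed
    qed (intro Un_least Csub_mono; simp)
  next
    assume h: "Csub v B UNIV = Csub v B {1..} \<union> Csub v B {..-1}"
    show "self_contained v B"
      unfolding self_contained_def
    proof
      fix C assume "C \<in> Csub v B UNIV"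
      then obtain N m where C: "C = submat v B N m" "N \<ge> 1" unfolding Csub_def by blast
      show "infinite {k. submat v B (fst C) k = C}"
      proof (rule int_set_infinite)
        fix L :: nat
        have "submat v B (N + 2*L) (m - int L) \<in> Csub v B UNIV"
          unfolding Csub_def using C(2) by auto
        then have "submat v B (N + 2*L) (m - int L) \<in> Csub v B {1..} \<union> Csub v B {..-1}"
          using h by simp
        then obtain N' k' where e: "submat v B (N + 2*L) (m - int L) = submat v B N' k'"
          and "N' \<ge> 1" and s: "{k' + 1 .. k' + int N'} \<subseteq> {1..} \<or> {k' + 1 .. k' + int N'} \<subseteq> {..-1}"
          unfolding Csub_def by blast
        have N': "N' = N + 2*L" using e unfolding submat_def by simp
        have mem1: "k' + 1 \<in> {k' + 1 .. k' + int N'}" "k' + int N' \<in> {k' + 1 .. k' + int N'}"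
          using \<open>N' \<ge> 1\<close> by auto
        have "k' \<ge> 0 \<or> k' + int N' \<le> -1" using s mem1 by auto
        then have "\<bar>k' + int L\<bar> \<ge> int L" using N' by auto
        moreover have "submat v B N (m - int L + int L) = submat v B N (k' + int L)"
          by (rule sub_shift) (use e N' in auto)
        ultimately show "\<exists>p\<in>{k. submat v B (fst C) k = C}. \<bar>p\<bar> \<ge> int L"
          using C by (intro bexI[of _ "k' + int L"]) (auto simp: submat_def)
      qed
    qed
  qed
qed

end
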